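(* Let $X$ be a finite set with similarity function $S$, suppose the target clustering $\mathcal{C}^{\ast}$ satisfies stability with respect to $S$, and let $\delta_u$ be the underclustering error of the initial clustering. In the unrestricted-merge model, in any run of the interactive algorithm using the global split procedure and the unrestricted merge procedure (described below), at most $\delta_u$ impure merge requests are issued.
   Context: For nonempty $A,A'\subseteq X$, $S(A,A')$ is the average of $S(x,y)$ over $x\in A,y\in A'$. $\mathcal{C}^{\ast}=\{C^{\ast}_1,\dots,C^{\ast}_k\}$ satisfies stability w.r.t. $S$ if for all $i\neq j$, every nonempty proper $A\subset C^{\ast}_i$ and nonempty $A'\subseteq C^{\ast}_j$: $S(A,C^{\ast}_i\setminus A)>S(A,A')$. For clusterings $\mathcal{A},\mathcal{B}$, $\mathrm{dist}(\mathcal{A},\mathcal{B})=\sum_{A\in\mathcal{A}}(|\{B\in\mathcal{B}:B\cap A\neq\emptyset\}|-1)$; the underclustering error of a clustering $\mathcal{C}$ is $\mathrm{dist}(\mathcal{C}^{\ast},\mathcal{C})$. Average-linkage tree $T_{glob}$ of $X$: leaves are singletons; repeatedly merge the two current nodes $N_1,N_2$ with largest $S(N_1,N_2)$ (ties arbitrary) into parent $N_1\cup N_2$ until the root $X$ remains. Split$(Y)$ for $|Y|\ge2$: with $N$ the deepest node of $T_{glob}$ containing $Y$ and children $N_1,N_2$, output $Y\cap N_1$, $Y\cap N_2$. Process (unrestricted-merge model): starting from the initial clustering, an oracle repeatedly issues split$(C_i)$, allowed only if current cluster $C_i$ contains points of two or more target clusters, or merge$(C_i,C_j)$ for distinct current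 clusters, allowed only if some target cluster meets both. Split procedure: replace $C_i$ by the output of Split$(C_i)$. Unrestricted merge procedure: let $C'_i,C'_j$ be the output of Split$(C_i\cup C_j)$; delete $C_i,C_j$; if $\{C'_i,C'_j\}=\{C_i,C_j\}$ add $C_i\cup C_j$, otherwise add $C'_i,C'_j$. A merge request merge$(C_i,C_j)$ is pure if $C_i$ and $C_j$ are both contained in the same target cluster, and impure otherwise. *)

theory Defs
  imports Complex_Main
begin

definition avg_sim :: "('a \<Rightarrow> 'a \<Rightarrow> real) \<Rightarrow> 'a set \<Rightarrow> 'a set \<Rightarrow> real" where
  "avg_sim S A A' = (\<Sum>x\<in>A. \<Sum>y\<in>A'. S x y) / (real (card A) * real (card A'))"

definition is_clustering :: "'a set \<Rightarrow> 'a set set \<Rightarrow> bool" where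
  "is_clustering X P \<longleftrightarrow> \<Union>P = X \<and> (\<forall>A\<in>P. A \<noteq> {}) \<and>
     (\<forall>A\<in>P. \<forall>B\<in>P. A \<noteq> B \<longrightarrow> A \<inter> B = {})"

definition target_stable :: "('a \<Rightarrow> 'a \<Rightarrow> real) \<Rightarrow> 'a set set \<Rightarrow> bool" where
  "target_stable S Cs \<longleftrightarrow> (\<forall>Ci\<in>Cs. \<forall>Cj\<in>Cs. Ci \<noteq> Cj \<longrightarrow>
     (\<forall>A A'. A \<noteq> {} \<and> A \<subset> Ci \<and> A' \<noteq> {} \<and> A' \<subseteq> Cj \<longrightarrow>
        avg_sim S A (Ci - A) > avg_sim S A A'))"

definition clust_dist :: "'a set set \<Rightarrow> 'a set set \<Rightarrow> int" where
  "clust_dist \<A> \<B> = (\<Sum>A\<in>\<A>. int (card {B\<in>\<B>. B \<inter> A \<noteq> {}}) - 1)"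

text \<open>Execution of average linkage: state = (current nodes P, all tree nodes T,
  recorded merges M as pairs of children).  Ties are broken arbitrarily.\<close>
inductive al_run :: "('a \<Rightarrow> 'a \<Rightarrow> real) \<Rightarrow> 'a set \<Rightarrow> 'a set set \<Rightarrow> 'a set set
    \<Rightarrow> ('a set \<times> 'a set) set \<Rightarrow> bool" for S X where
  init: "al_run S X {{x} | x. x \<in> X} {{x} | x. x \<in> X} {}"
| merge: "\<lbrakk> al_run S X P T M; N1 \<in> P; N2 \<in> P; N1 \<noteq> N2;
           \<forall>M1\<in>P. \<forall>M2\<in>P. M1 \<noteq> M2 \<longrightarrow> avg_sim S M1 M2 \<le> avg_sim S N1 N2 \<rbrakk>
         \<Longrightarrow> al_run S X ((P - {N1, N2}) \<union> {N1 \<union> N2}) (T \<union> {N1 \<union> N2})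
               (M \<union> {(N1, N2)})"

definition al_tree :: "('a \<Rightarrow> 'a \<Rightarrow> real) \<Rightarrow> 'a set \<Rightarrow> 'a set set
    \<Rightarrow> ('a set \<times> 'a set) set \<Rightarrow> bool" where
  "al_tree S X T M \<longleftrightarrow> (\<exists>P. al_run S X P T M \<and> (\<forall>N1\<in>P. \<forall>N2\<in>P. N1 = N2))"

text \<open>Split(Y) w.r.t. the tree (T, M): N is the deepest node containing Y,
  with children N1, N2; output Y \<inter> N1, Y \<inter> N2.\<close>
definition split_out :: "'a set set \<Rightarrow> ('a set \<times> 'a set) set \<Rightarrow> 'a set
    \<Rightarrow> 'a set \<Rightarrow> 'a set \<Rightarrow> bool" where
  "split_out T M Y A B \<longleftrightarrow> (\<exists>N1 N2. (N1, N2) \<in> M \<and> Y \<subseteq> N1 \<union> N2 \<and>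
     (\<forall>N'\<in>T. Y \<subseteq> N' \<longrightarrow> N1 \<union> N2 \<subseteq> N') \<and> A = Y \<inter> N1 \<and> B = Y \<inter> N2)"

text \<open>One oracle request and its processing (unrestricted-merge model).
  The boolean flag is True iff the step is an impure merge request.\<close>
inductive proc_step :: "'a set set \<Rightarrow> ('a set \<times> 'a set) set \<Rightarrow> 'a set set
    \<Rightarrow> 'a set set \<Rightarrow> bool \<Rightarrow> 'a set set \<Rightarrow> bool" for T M Cs where
  split: "\<lbrakk> Ci \<in> C; D1 \<in> Cs; D2 \<in> Cs; D1 \<noteq> D2; Ci \<inter> D1 \<noteq> {}; Ci \<inter> D2 \<noteq> {};
           split_out T M Ci A B \<rbrakk>
         \<Longrightarrow> proc_step T M Cs C False ((C - {Ci}) \<union> {A, B})"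
| merge: "\<lbrakk> Ci \<in> C; Cj \<in> C; Ci \<noteq> Cj; D \<in> Cs; D \<inter> Ci \<noteq> {}; D \<inter> Cj \<noteq> {};
           split_out T M (Ci \<union> Cj) A B;
           C' = (if {A, B} = {Ci, Cj} then (C - {Ci, Cj}) \<union> {Ci \<union> Cj}
                 else (C - {Ci, Cj}) \<union> {A, B});
           imp = (\<not> (\<exists>D'\<in>Cs. Ci \<subseteq> D' \<and> Cj \<subseteq> D')) \<rbrakk>
         \<Longrightarrow> proc_step T M Cs C imp C'"

inductive proc_run :: "'a set set \<Rightarrow> ('a set \<times> 'a set) set \<Rightarrow> 'a set set
    \<Rightarrow> 'a set set \<Rightarrow> 'a set set \<Rightarrow> nat \<Rightarrow> bool" for T M Cs C0 where
  start: "proc_run T M Cs C0 C0 0"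
| step: "\<lbrakk> proc_run T M Cs C0 C n; proc_step T M Cs C imp C' \<rbrakk>
         \<Longrightarrow> proc_run T M Cs C0 C' (if imp then Suc n else n)"

end

theory Submission
  imports Defs
begin

definition good :: "'a set set \<Rightarrow> 'a set \<Rightarrow> bool" where
  "good Cs Q \<longleftrightarrow> (\<exists>D\<in>Cs. Q \<subseteq> D) \<or> (\<forall>D\<in>Cs. D \<subseteq> Q \<or> D \<inter> Q = {})"

lemma avg_sym:
  assumes "\<And>x y. S x y = S y x"
  shows "avg_sim S A B = avg_sim S B A"
  unfolding avg_sim_def using assms by (simp add: sum.swap[of _ A] mult.commute)

lemma sum_sim_union:
  assumes "finite F" "\<forall>Q\<in>F. finite Q" "\<forall>Q\<in>F. \<forall>R\<in>F. Q\<noteq>R \<longrightarrow> Q\<inter>R={}"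
  shows "(\<Sum>x\<in>A. \<Sum>y\<in>\<Union>F. S x y) = (\<Sum>Q\<in>F. \<Sum>x\<in>A. \<Sum>y\<in>Q. S x y)"
proof -
  have "(\<Sum>x\<in>A. \<Sum>y\<in>\<Union>F. S x y) = (\<Sum>x\<in>A. \<Sum>Q\<in>F. \<Sum>y\<in>Q. S x y)"
    using assms by (simp add: sum.Union_disjoint)
  also have "\<dots> = (\<Sum>Q\<in>F. \<Sum>x\<in>A. \<Sum>y\<in>Q. S x y)" by (rule sum.swap)
  finally show ?thesis .
qed

lemma card_union_F:
  assumes "finite F" "\<forall>Q\<in>F. finite Q" "\<forall>Q\<in>F. \<forall>R\<in>F. Q\<noteq>R \<longrightarrow> Q\<inter>R={}"
  shows "card (\<Union>F) = (\<Sum>Q\<in>F. card Q)"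
  using assms by (intro card_Union_disjoint) (auto simp: pairwise_def disjnt_def)

lemma avg_le_union:
  assumes "finite A" "A \<noteq> {}" "finite F" "F \<noteq> {}" "\<forall>Q\<in>F. finite Q \<and> Q \<noteq> {}"
    "\<forall>Q\<in>F. \<forall>R\<in>F. Q\<noteq>R \<longrightarrow> Q\<inter>R={}" "\<forall>Q\<in>F. avg_sim S A Q \<le> c"
  shows "avg_sim S A (\<Union>F) \<le> c"
proof -
  have each: "(\<Sum>x\<in>A. \<Sum>y\<in>Q. S x y) \<le> c * (real (card A) * real (card Q))" if "Q \<in> F" for Q
  proof -
    have "real (card A) * real (card Q) > 0" using assms that by (simp add: card_gt_0_iff)
    moreover have "avg_sim S A Q \<le> c" using assms(7) that by blast
    ultimately show ?thesis unfolding avg_sim_def by (simp add: pos_divide_le_eq)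
  qed
  have fu: "finite (\<Union>F)" "\<Union>F \<noteq> {}" using assms by auto
  have "(\<Sum>x\<in>A. \<Sum>y\<in>\<Union>F. S x y) = (\<Sum>Q\<in>F. \<Sum>x\<in>A. \<Sum>y\<in>Q. S x y)"
    using assms by (intro sum_sim_union) auto
  also have "\<dots> \<le> (\<Sum>Q\<in>F. c * (real (card A) * real (card Q)))" by (rule sum_mono) (use each in auto)
  also have "\<dots> = c * real (card A) * real (\<Sum>Q\<in>F. card Q)"
    by (simp add: sum_distrib_left mult.assoc)
  also have "(\<Sum>Q\<in>F. card Q) = card (\<Union>F)" using assms by (intro card_union_F[symmetric]) auto
  finally have "(\<Sum>x\<in>A. \<Sum>y\<in>\<Union>F. S x y) \<le> c * (real (card A) * real (card (\<Union>F)))"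
    by (simp add: mult.assoc)
  moreover have "real (card A) * real (card (\<Union>F)) > 0" using assms fu by (simp add: card_gt_0_iff)
  ultimately show ?thesis unfolding avg_sim_def by (simp add: pos_divide_le_eq)
qed

lemma avg_less_union:
  assumes "finite A" "A \<noteq> {}" "finite F" "F \<noteq> {}" "\<forall>Q\<in>F. finite Q \<and> Q \<noteq> {}"
    "\<forall>Q\<in>F. \<forall>R\<in>F. Q\<noteq>R \<longrightarrow> Q\<inter>R={}" "\<forall>Q\<in>F. avg_sim S A Q < c"
  shows "avg_sim S A (\<Union>F) < c"
proof -
  have each: "(\<Sum>x\<in>A. \<Sum>y\<in>Q. S x y) < c * (real (card A) * real (card Q))" if "Q \<in> F" for Q
  proof -
    have "real (card A) * real (card Q) > 0" using assms that by (simp add: card_gt_0_iff)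
    moreover have "avg_sim S A Q < c" using assms(7) that by blast
    ultimately show ?thesis unfolding avg_sim_def by (simp add: pos_divide_less_eq)
  qed
  have fu: "finite (\<Union>F)" "\<Union>F \<noteq> {}" using assms by auto
  have "(\<Sum>x\<in>A. \<Sum>y\<in>\<Union>F. S x y) = (\<Sum>Q\<in>F. \<Sum>x\<in>A. \<Sum>y\<in>Q. S x y)"
    using assms by (intro sum_sim_union) auto
  also have "\<dots> < (\<Sum>Q\<in>F. c * (real (card A) * real (card Q)))"
    by (rule sum_strict_mono) (use each assms in auto)
  also have "\<dots> = c * real (card A) * real (\<Sum>Q\<in>F. card Q)"
    by (simp add: sum_distrib_left mult.assoc)
  also have "(\<Sum>Q\<in>F. card Q) = card (\<Union>F)" using assms by (intro card_union_F[symmetric]) auto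
  finally have "(\<Sum>x\<in>A. \<Sum>y\<in>\<Union>F. S x y) < c * (real (card A) * real (card (\<Union>F)))"
    by (simp add: mult.assoc)
  moreover have "real (card A) * real (card (\<Union>F)) > 0" using assms fu by (simp add: card_gt_0_iff)
  ultimately show ?thesis unfolding avg_sim_def by (simp add: pos_divide_less_eq)
qed

lemma meet_good:
  assumes "good Cs Q" "D \<in> Cs" "Q \<inter> D \<noteq> {}" "is_clustering X Cs"
  shows "Q \<subseteq> D \<or> D \<subseteq> Q"
proof (cases "\<exists>D'\<in>Cs. Q \<subseteq> D'")
  case True
  then obtain D' where "D' \<in> Cs" "Q \<subseteq> D'" by blast
  hence "D' = D" using assms unfolding is_clustering_def by blast
  thus ?thesis using \<open>Q \<subseteq> D'\<close> by simp
next
  case False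
  thus ?thesis using assms unfolding good_def by blast
qed

lemma core:
  assumes Cs: "is_clustering X Cs" and stab: "target_stable S Cs" and fin: "finite X"
    and PU: "\<Union>P = X" and Pne: "\<forall>Q\<in>P. Q \<noteq> {}"
    and Pd: "\<forall>Q\<in>P. \<forall>R\<in>P. Q\<noteq>R \<longrightarrow> Q\<inter>R={}" and Pg: "\<forall>Q\<in>P. good Cs Q"
    and N1: "N1 \<in> P" and N2: "N2 \<in> P" and D: "D \<in> Cs" "N1 \<subset> D" "N2 \<inter> D = {}"
    and mx: "\<forall>Q\<in>P. Q \<noteq> N1 \<longrightarrow> avg_sim S N1 Q \<le> c"
    and c: "c = avg_sim S N1 N2"
  shows False
proof -
  have CsU: "\<Union>Cs = X" and Csd: "\<forall>A\<in>Cs. \<forall>B\<in>Cs. A \<noteq> B \<longrightarrow> A \<inter> B = {}"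
    and Csne: "\<forall>A\<in>Cs. A \<noteq> {}"
    using Cs unfolding is_clustering_def by auto
  have finP: "finite P" using PU fin by (metis finite_UnionD)
  have finQ: "\<And>Q. Q \<in> P \<Longrightarrow> finite Q" using PU fin by (meson Union_upper finite_subset)
  have DX: "D \<subseteq> X" using D CsU by blast
  have N1ne: "N1 \<noteq> {}" using Pne N1 by blast
  have N2ne: "N2 \<noteq> {}" using Pne N2 by blast
  define F1 where "F1 = {Q\<in>P. Q \<inter> (D - N1) \<noteq> {}}"
  have sub: "Q \<subseteq> D - N1" if "Q \<in> F1" for Q
  proof -
    have QP: "Q \<in> P" and Qm: "Q \<inter> (D - N1) \<noteq> {}" using that F1_def by auto
    have "Q \<noteq> N1" using Qm by blast
    hence QN1: "Q \<inter> N1 = {}" using Pd QP N1 by blast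
    have "Q \<inter> D \<noteq> {}" using Qm by blast
    hence "Q \<subseteq> D \<or> D \<subseteq> Q" using meet_good[OF _ D(1) _ Cs] Pg QP by blast
    moreover have "\<not> D \<subseteq> Q" using QN1 N1ne D(2) by blast
    ultimately show ?thesis using QN1 by blast
  qed
  have U1: "\<Union>F1 = D - N1"
  proof
    show "\<Union>F1 \<subseteq> D - N1" using sub by blast
    show "D - N1 \<subseteq> \<Union>F1"
    proof
      fix x assume x: "x \<in> D - N1"
      then obtain Q where "Q \<in> P" "x \<in> Q" using DX PU by blast
      thus "x \<in> \<Union>F1" using x unfolding F1_def by blast
    qed
  qed
  have "D - N1 \<noteq> {}" using D(2) by blast
  hence F1ne: "F1 \<noteq> {}" using U1 by auto
  have le1: "avg_sim S N1 (D - N1) \<le> c"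
    unfolding U1[symmetric]
  proof (rule avg_le_union)
    show "finite N1" using finQ N1 by blast
    show "N1 \<noteq> {}" by (rule N1ne)
    show "finite F1" using finP F1_def by simp
    show "F1 \<noteq> {}" by (rule F1ne)
    show "\<forall>Q\<in>F1. finite Q \<and> Q \<noteq> {}" using finQ F1_def by auto
    show "\<forall>Q\<in>F1. \<forall>R\<in>F1. Q \<noteq> R \<longrightarrow> Q \<inter> R = {}" using Pd F1_def by auto
    show "\<forall>Q\<in>F1. avg_sim S N1 Q \<le> c" using mx F1_def by auto
  qed
  define F2 where "F2 = (\<lambda>D'. N2 \<inter> D') ` {D'\<in>Cs. N2 \<inter> D' \<noteq> {}}"
  have N2X: "N2 \<subseteq> X" using N2 PU by blast
  have U2: "\<Union>F2 = N2" using N2X CsU unfolding F2_def by blast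
  have finCs: "finite Cs" using CsU fin by (metis finite_UnionD)
  have le2: "avg_sim S N1 N2 < avg_sim S N1 (D - N1)"
    unfolding U2[symmetric]
  proof (rule avg_less_union)
    show "finite N1" using finQ N1 by blast
    show "N1 \<noteq> {}" by (rule N1ne)
    show "finite F2" using finCs F2_def by simp
    show "F2 \<noteq> {}" using U2 N2ne by auto
    show "\<forall>Q\<in>F2. finite Q \<and> Q \<noteq> {}" using finQ N2 F2_def by auto
    show "\<forall>Q\<in>F2. \<forall>R\<in>F2. Q \<noteq> R \<longrightarrow> Q \<inter> R = {}" using Csd unfolding F2_def by blast
    show "\<forall>Q\<in>F2. avg_sim S N1 Q < avg_sim S N1 (D - N1)"
    proof
      fix Q assume "Q \<in> F2"
      then obtain D' where D': "D' \<in> Cs" "N2 \<inter> D' \<noteq> {}" "Q = N2 \<inter> D'" unfolding F2_def by blast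
      have "D \<noteq> D'" using D(3) D' by blast
      thus "avg_sim S N1 Q < avg_sim S N1 (D - N1)"
      proof -
        have st: "\<forall>Ci\<in>Cs. \<forall>Cj\<in>Cs. Ci \<noteq> Cj \<longrightarrow>
           (\<forall>A A'. A \<noteq> {} \<and> A \<subset> Ci \<and> A' \<noteq> {} \<and> A' \<subseteq> Cj \<longrightarrow>
              avg_sim S A (Ci - A) > avg_sim S A A')" using stab unfolding target_stable_def .
        have "N1 \<noteq> {} \<and> N1 \<subset> D \<and> N2 \<inter> D' \<noteq> {} \<and> N2 \<inter> D' \<subseteq> D'" using N1ne D(2) D' by blast
        hence "avg_sim S N1 (D - N1) > avg_sim S N1 (N2 \<inter> D')"
          using st[rule_format, OF D(1) D'(1) \<open>D \<noteq> D'\<close>, of N1 "N2 \<inter> D'"] by blast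
        thus ?thesis using D'(3) by simp
      qed
    qed
  qed
  show False using le1 le2 c by simp
qed

lemma merge_good:
  assumes Cs: "is_clustering X Cs" and stab: "target_stable S Cs" and fin: "finite X"
    and sym: "\<And>x y. S x y = S y x"
    and PU: "\<Union>P = X" and Pne: "\<forall>Q\<in>P. Q \<noteq> {}"
    and Pd: "\<forall>Q\<in>P. \<forall>R\<in>P. Q\<noteq>R \<longrightarrow> Q\<inter>R={}" and Pg: "\<forall>Q\<in>P. good Cs Q"
    and N1: "N1 \<in> P" and N2: "N2 \<in> P" and ne: "N1 \<noteq> N2"
    and mx: "\<forall>M1\<in>P. \<forall>M2\<in>P. M1 \<noteq> M2 \<longrightarrow> avg_sim S M1 M2 \<le> avg_sim S N1 N2"
  shows "good Cs (N1 \<union> N2)"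
proof (rule ccontr)
  assume ng: "\<not> good Cs (N1 \<union> N2)"
  then obtain D where D: "D \<in> Cs" "\<not> D \<subseteq> N1 \<union> N2" "D \<inter> (N1 \<union> N2) \<noteq> {}"
    unfolding good_def by blast
  have nsub: "\<not> N1 \<union> N2 \<subseteq> D" using ng D(1) unfolding good_def by blast
  have g1: "good Cs N1" and g2: "good Cs N2" using Pg N1 N2 by auto
  show False
  proof (cases "N1 \<inter> D \<noteq> {}")
    case True
    hence "N1 \<subseteq> D" using meet_good[OF g1 D(1) _ Cs] D(2) by blast
    hence ps: "N1 \<subset> D" using D(2) by blast
    show False
    proof (cases "N2 \<inter> D = {}")
      case True
      show False
        by (rule core[OF Cs stab fin PU Pne Pd Pg N1 N2 D(1) ps True _ refl])
           (use mx N1 in auto)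
    next
      case False
      hence "N2 \<subseteq> D" using meet_good[OF g2 D(1) _ Cs] D(2) by blast
      thus False using nsub \<open>N1 \<subseteq> D\<close> by blast
    qed
  next
    case False
    hence m2: "N2 \<inter> D \<noteq> {}" using D(3) by blast
    hence "N2 \<subseteq> D" using meet_good[OF g2 D(1) _ Cs] D(2) by blast
    hence ps: "N2 \<subset> D" using D(2) by blast
    have e: "avg_sim S N2 N1 = avg_sim S N1 N2" by (rule avg_sym[OF sym])
    show False
      by (rule core[OF Cs stab fin PU Pne Pd Pg N2 N1 D(1) ps _ _ refl])
         (use False mx N2 e in auto)
  qed
qed

lemma al_inv:
  assumes "al_run S X P T M" and Cs: "is_clustering X Cs" and stab: "target_stable S Cs"
    and fin: "finite X" and sym: "\<And>x y. S x y = S y x"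
  shows "\<Union>P = X \<and> (\<forall>Q\<in>P. Q \<noteq> {}) \<and> (\<forall>Q\<in>P. \<forall>R\<in>P. Q\<noteq>R \<longrightarrow> Q\<inter>R={})
    \<and> (\<forall>Q\<in>P. good Cs Q) \<and> (\<forall>(N1,N2)\<in>M. N1 \<inter> N2 = {} \<and> good Cs N1 \<and> good Cs N2)"
  using assms(1)
proof (induction rule: al_run.induct)
  case init
  have CsU: "\<Union>Cs = X" using Cs unfolding is_clustering_def by auto
  have "good Cs {x}" if "x \<in> X" for x using that CsU unfolding good_def by blast
  thus ?case by auto
next
  case (merge P T M N1 N2)
  have PU: "\<Union>P = X" and Pne: "\<forall>Q\<in>P. Q \<noteq> {}"
    and Pd: "\<forall>Q\<in>P. \<forall>R\<in>P. Q\<noteq>R \<longrightarrow> Q\<inter>R={}" and Pg: "\<forall>Q\<in>P. good Cs Q"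
    and Mi: "\<forall>(N1,N2)\<in>M. N1 \<inter> N2 = {} \<and> good Cs N1 \<and> good Cs N2" using merge.IH by auto
  have gN: "good Cs (N1 \<union> N2)"
    by (rule merge_good[OF Cs stab fin sym PU Pne Pd Pg merge.hyps(2,3,4,5)])
  have d12: "N1 \<inter> N2 = {}" using Pd merge.hyps(2,3,4) by blast
  have "\<Union>(P - {N1, N2} \<union> {N1 \<union> N2}) = X" using PU merge.hyps(2,3) by blast
  moreover have "\<forall>Q\<in>P - {N1, N2} \<union> {N1 \<union> N2}. Q \<noteq> {}" using Pne merge.hyps(2) by auto
  moreover have "\<forall>Q\<in>P - {N1, N2} \<union> {N1 \<union> N2}. \<forall>R\<in>P - {N1, N2} \<union> {N1 \<union> N2}. Q\<noteq>R \<longrightarrow> Q\<inter>R={}"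
  proof (intro ballI impI)
    fix Q R assume Q: "Q \<in> P - {N1, N2} \<union> {N1 \<union> N2}" and R: "R \<in> P - {N1, N2} \<union> {N1 \<union> N2}" and "Q \<noteq> R"
    show "Q \<inter> R = {}"
    proof (cases "Q = N1 \<union> N2")
      case True
      hence "R \<in> P - {N1, N2}" using R \<open>Q \<noteq> R\<close> by auto
      thus ?thesis using True Pd merge.hyps(2,3) by blast
    next
      case False
      hence Q': "Q \<in> P - {N1, N2}" using Q by auto
      show ?thesis
      proof (cases "R = N1 \<union> N2")
        case True thus ?thesis using Q' Pd merge.hyps(2,3) by blast
      next
        case False thus ?thesis using Q' R Pd \<open>Q \<noteq> R\<close> by auto
      qed
    qed
  qed
  moreover have "\<forall>Q\<in>P - {N1, N2} \<union> {N1 \<union> N2}. good Cs Q" using Pg gN by auto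
  moreover have "\<forall>(A,B)\<in>M \<union> {(N1, N2)}. A \<inter> B = {} \<and> good Cs A \<and> good Cs B"
    using Mi d12 Pg merge.hyps(2,3) by auto
  ultimately show ?case by blast
qed


definition Mprop :: "'a set set \<Rightarrow> ('a set \<times> 'a set) set \<Rightarrow> bool" where
  "Mprop Cs M \<longleftrightarrow> (\<forall>(N1,N2)\<in>M. N1 \<inter> N2 = {} \<and> good Cs N1 \<and> good Cs N2)"

lemma split_facts:
  assumes "split_out T M Y A B" "Mprop Cs M" "is_clustering X Cs"
  shows "A \<union> B = Y \<and> A \<inter> B = {} \<and> (\<forall>E\<in>Cs. A \<inter> E \<noteq> {} \<and> B \<inter> E \<noteq> {} \<longrightarrow> Y \<subseteq> E)"
proof -
  obtain N1 N2 where N: "(N1, N2) \<in> M" "Y \<subseteq> N1 \<union> N2" "A = Y \<inter> N1" "B = Y \<inter> N2"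
    using assms(1) unfolding split_out_def by blast
  have d: "N1 \<inter> N2 = {}" and g1: "good Cs N1" and g2: "good Cs N2"
    using assms(2) N(1) unfolding Mprop_def by auto
  have "Y \<subseteq> E" if E: "E \<in> Cs" "A \<inter> E \<noteq> {}" "B \<inter> E \<noteq> {}" for E
  proof -
    have m1: "N1 \<inter> E \<noteq> {}" and m2: "N2 \<inter> E \<noteq> {}" using E N by auto
    have "N1 \<subseteq> E \<or> E \<subseteq> N1" by (rule meet_good[OF g1 E(1) m1 assms(3)])
    hence s1: "N1 \<subseteq> E" using m2 d by blast
    have "N2 \<subseteq> E \<or> E \<subseteq> N2" by (rule meet_good[OF g2 E(1) m2 assms(3)])
    hence s2: "N2 \<subseteq> E" using m1 d by blast
    show ?thesis using s1 s2 N(2) by blast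
  qed
  thus ?thesis using N d by blast
qed

lemma cnt_replace:
  assumes "finite C" "R \<subseteq> C" "finite N"
    "card {E\<in>N. E \<inter> D \<noteq> {}} + k \<le> card {E\<in>R. E \<inter> D \<noteq> {}}"
  shows "card {E\<in>(C - R) \<union> N. E \<inter> D \<noteq> {}} + k \<le> card {E\<in>C. E \<inter> D \<noteq> {}}"
proof -
  have "{E\<in>(C - R) \<union> N. E \<inter> D \<noteq> {}} = {E\<in>C - R. E \<inter> D \<noteq> {}} \<union> {E\<in>N. E \<inter> D \<noteq> {}}" by blast
  hence a: "card {E\<in>(C - R) \<union> N. E \<inter> D \<noteq> {}} \<le> card {E\<in>C - R. E \<inter> D \<noteq> {}} + card {E\<in>N. E \<inter> D \<noteq> {}}"
    by (simp add: card_Un_le)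
  have "{E\<in>C. E \<inter> D \<noteq> {}} = {E\<in>C - R. E \<inter> D \<noteq> {}} \<union> {E\<in>R. E \<inter> D \<noteq> {}}" using assms(2) by blast
  moreover have "finite R" using assms(1,2) finite_subset by blast
  ultimately have b: "card {E\<in>C. E \<inter> D \<noteq> {}} = card {E\<in>C - R. E \<inter> D \<noteq> {}} + card {E\<in>R. E \<inter> D \<noteq> {}}"
    using assms(1) by (subst card_Un_disjoint[symmetric]) (auto intro: finite_subset)
  show ?thesis using a b assms(4) by linarith
qed

lemma repl_inv:
  assumes U: "\<Union>C = X" and dC: "\<forall>Q\<in>C. \<forall>Q'\<in>C. Q\<noteq>Q' \<longrightarrow> Q\<inter>Q'={}" and RC: "R \<subseteq> C"
    and NR: "\<Union>N = \<Union>R" and dN: "\<forall>Q\<in>N. \<forall>Q'\<in>N. Q\<noteq>Q' \<longrightarrow> Q\<inter>Q'={}"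
  shows "\<Union>((C - R) \<union> N) = X \<and> (\<forall>Q\<in>(C - R) \<union> N. \<forall>Q'\<in>(C - R) \<union> N. Q\<noteq>Q' \<longrightarrow> Q\<inter>Q'={})"
proof
  have "\<Union>((C - R) \<union> N) = \<Union>(C - R) \<union> \<Union>R" using NR by simp
  also have "\<dots> = \<Union>C" using RC by blast
  finally show "\<Union>((C - R) \<union> N) = X" using U by simp
  have x: "Q \<inter> Q' = {}" if "Q \<in> C - R" "Q' \<in> N" for Q Q'
  proof -
    have "\<forall>W\<in>R. Q \<inter> W = {}"
    proof
      fix W assume "W \<in> R"
      hence "W \<in> C" "W \<noteq> Q" using RC that(1) by auto
      thus "Q \<inter> W = {}" using dC that(1) by blast
    qed
    moreover have "Q' \<subseteq> \<Union>R" using NR that(2) by blast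
    ultimately show ?thesis by blast
  qed
  show "\<forall>Q\<in>(C - R) \<union> N. \<forall>Q'\<in>(C - R) \<union> N. Q\<noteq>Q' \<longrightarrow> Q\<inter>Q'={}"
  proof (intro ballI impI)
    fix Q Q' assume q: "Q \<in> (C - R) \<union> N" "Q' \<in> (C - R) \<union> N" "Q \<noteq> Q'"
    show "Q \<inter> Q' = {}"
    proof (cases "Q \<in> N")
      case True
      show ?thesis
      proof (cases "Q' \<in> N")
        case True thus ?thesis using \<open>Q \<in> N\<close> q(3) dN by blast
      next
        case False hence "Q' \<in> C - R" using q(2) by blast
        from x[OF this \<open>Q \<in> N\<close>] show ?thesis by blast
      qed
    next
      case False
      hence Qc: "Q \<in> C - R" using q by blast
      show ?thesis
      proof (cases "Q' \<in> N")
        case True thus ?thesis using x[OF Qc] by blast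
      next
        case False hence "Q' \<in> C" using q(2) by blast
        thus ?thesis using Qc q(3) dC by blast
      qed
    qed
  qed
qed
lemma card2_eq: "A \<noteq> B \<Longrightarrow> card {E\<in>{A,B}. P E} = (if P A then 1 else 0) + (if P B then (1::nat) else 0)"
proof -
  assume ne: "A \<noteq> B"
  consider "P A" "P B" | "P A" "\<not> P B" | "\<not> P A" "P B" | "\<not> P A" "\<not> P B" by blast
  thus ?thesis
  proof cases
    case 1 hence "{E\<in>{A,B}. P E} = {A,B}" by auto thus ?thesis using 1 ne by simp
  next
    case 2 hence "{E\<in>{A,B}. P E} = {A}" by auto thus ?thesis using 2 by simp
  next
    case 3 hence "{E\<in>{A,B}. P E} = {B}" by auto thus ?thesis using 3 by simp
  next
    case 4 hence "{E\<in>{A,B}. P E} = {}" by auto thus ?thesis using 4 by simp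
  qed
qed
lemma card2_le: "card {E\<in>{A,B}. P E} \<le> (if P A then 1 else 0) + (if P B then (1::nat) else 0)"
proof (cases "A = B")
  case True
  hence "{E\<in>{A,B}. P E} = (if P A then {A} else {})" by auto
  thus ?thesis by simp
next
  case False thus ?thesis using card2_eq[OF False, of P] by simp
qed
lemma card1_eq: "card {E\<in>{A}. P E} = (if P A then (1::nat) else 0)"
proof -
  have "{E\<in>{A}. P E} = (if P A then {A} else {})" by auto
  thus ?thesis by simp
qed


definition cnt :: "'a set set \<Rightarrow> 'a set \<Rightarrow> nat" where
  "cnt K D = card {E\<in>K. E \<inter> D \<noteq> {}}"

lemma finish:
  assumes "finite Cs" "finite C" "R \<subseteq> C" "finite N" "C' = (C - R) \<union> N"
    "\<forall>E\<in>Cs. cnt N E \<le> cnt R E" "imp \<longrightarrow> (\<exists>E\<in>Cs. cnt N E + 1 \<le> cnt R E)"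
  shows "clust_dist Cs C' + (if imp then 1 else 0) \<le> clust_dist Cs C"
proof -
  have le: "cnt C' E + k \<le> cnt C E" if "cnt N E + k \<le> cnt R E" for E k
    using cnt_replace[OF assms(2,3,4) that[unfolded cnt_def]] assms(5) unfolding cnt_def by simp
  have le0: "\<forall>E\<in>Cs. int (cnt C' E) - 1 \<le> int (cnt C E) - 1" using le[of _ 0] assms(6) by fastforce
  have cd: "clust_dist Cs K = (\<Sum>E\<in>Cs. int (cnt K E) - 1)" for K unfolding clust_dist_def cnt_def by simp
  show ?thesis
  proof (cases imp)
    case True
    then obtain E0 where "E0 \<in> Cs" "cnt N E0 + 1 \<le> cnt R E0" using assms(7) by blast
    moreover have "cnt C' E0 + 1 \<le> cnt C E0" using le calculation(2) by blast
    ultimately have "E0 \<in> Cs" "int (cnt C' E0) - 1 < int (cnt C E0) - 1" by auto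
    hence "(\<Sum>E\<in>Cs. int (cnt C' E) - 1) < (\<Sum>E\<in>Cs. int (cnt C E) - 1)"
      using sum_strict_mono_ex1[OF assms(1) le0] by blast
    thus ?thesis using True cd by simp
  next
    case False
    have "(\<Sum>E\<in>Cs. int (cnt C' E) - 1) \<le> (\<Sum>E\<in>Cs. int (cnt C E) - 1)"
      using le0 by (intro sum_mono) blast
    thus ?thesis using False cd by simp
  qed
qed

lemma step_inv:
  assumes st: "proc_step T M Cs C imp C'" and Mp: "Mprop Cs M" and Cs: "is_clustering X Cs"
    and fin: "finite X" and U: "\<Union>C = X" and dC: "\<forall>Q\<in>C. \<forall>Q'\<in>C. Q\<noteq>Q' \<longrightarrow> Q\<inter>Q'={}"
  shows "\<Union>C' = X \<and> (\<forall>Q\<in>C'. \<forall>Q'\<in>C'. Q\<noteq>Q' \<longrightarrow> Q\<inter>Q'={})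
    \<and> clust_dist Cs C' + (if imp then 1 else 0) \<le> clust_dist Cs C"
proof -
  have CsU: "\<Union>Cs = X" and Csd: "\<forall>A\<in>Cs. \<forall>B\<in>Cs. A \<noteq> B \<longrightarrow> A \<inter> B = {}"
    using Cs unfolding is_clustering_def by auto
  have finCs: "finite Cs" using CsU fin by (metis finite_UnionD)
  have finC: "finite C" using U fin by (metis finite_UnionD)
  have ind1: "cnt {A} E = (if A \<inter> E \<noteq> {} then 1 else 0)" for A E
    unfolding cnt_def by (rule card1_eq)
  have ind2le: "cnt {A,B} E \<le> (if A \<inter> E \<noteq> {} then 1 else 0) + (if B \<inter> E \<noteq> {} then 1 else 0)" for A B E
    unfolding cnt_def by (rule card2_le)
  have ind2eq: "A \<noteq> B \<Longrightarrow> cnt {A,B} E = (if A \<inter> E \<noteq> {} then 1 else 0) + (if B \<inter> E \<noteq> {} then 1 else 0)" for A B E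
    unfolding cnt_def by (rule card2_eq)
  from st show ?thesis
  proof (cases rule: proc_step.cases)
    case (split Ci D1 D2 A B)
    have sf: "A \<union> B = Ci" "A \<inter> B = {}" "\<forall>E\<in>Cs. A \<inter> E \<noteq> {} \<and> B \<inter> E \<noteq> {} \<longrightarrow> Ci \<subseteq> E"
      using split_facts[OF split(9) Mp Cs] by auto
    have ri: "\<Union>((C - {Ci}) \<union> {A,B}) = X \<and> (\<forall>Q\<in>(C - {Ci}) \<union> {A,B}. \<forall>Q'\<in>(C - {Ci}) \<union> {A,B}. Q\<noteq>Q' \<longrightarrow> Q\<inter>Q'={})"
      by (rule repl_inv[OF U dC]) (use split(3) sf in auto)
    have "\<forall>E\<in>Cs. cnt {A,B} E \<le> cnt {Ci} E"
    proof
      fix E assume E: "E \<in> Cs"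
      have nb: "\<not> (A \<inter> E \<noteq> {} \<and> B \<inter> E \<noteq> {})"
      proof
        assume "A \<inter> E \<noteq> {} \<and> B \<inter> E \<noteq> {}"
        hence "Ci \<subseteq> E" using sf(3) E by blast
        hence "D1 \<inter> E \<noteq> {}" "D2 \<inter> E \<noteq> {}" using split(7,8) by auto
        hence "D1 = E" "D2 = E" using Csd E split(4,5) by blast+
        thus False using split(6) by simp
      qed
      have "A \<subseteq> Ci" "B \<subseteq> Ci" using sf(1) by auto
      thus "cnt {A,B} E \<le> cnt {Ci} E" using ind2le[of A B E] ind1[of Ci E] nb
        by (auto split: if_splits)
    qed
    moreover have "clust_dist Cs C' + (if imp then 1 else 0) \<le> clust_dist Cs C"
      by (rule finish[OF finCs finC _ _ split(2)]) (use split calculation in auto)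
    ultimately show ?thesis using ri split(2) by simp
  next
    case (merge Ci Cj D A B)
    have sf: "A \<union> B = Ci \<union> Cj" "A \<inter> B = {}"
      "\<forall>E\<in>Cs. A \<inter> E \<noteq> {} \<and> B \<inter> E \<noteq> {} \<longrightarrow> Ci \<union> Cj \<subseteq> E"
      using split_facts[OF merge(7) Mp Cs] by auto
    have R2: "cnt {Ci,Cj} E = (if Ci \<inter> E \<noteq> {} then 1 else 0) + (if Cj \<inter> E \<noteq> {} then 1 else 0)" for E
      using ind2eq[OF merge(3)] .
    have RC: "{Ci, Cj} \<subseteq> C" using merge(1,2) by auto
    have DD: "D \<inter> Ci \<noteq> {}" "D \<inter> Cj \<noteq> {}" using merge(5,6) by auto
    show ?thesis
    proof (cases "{A, B} = {Ci, Cj}")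
      case True
      hence C'e: "C' = (C - {Ci, Cj}) \<union> {Ci \<union> Cj}" using merge(8) by simp
      have ri: "\<Union>((C - {Ci, Cj}) \<union> {Ci \<union> Cj}) = X \<and> (\<forall>Q\<in>(C - {Ci, Cj}) \<union> {Ci \<union> Cj}. \<forall>Q'\<in>(C - {Ci, Cj}) \<union> {Ci \<union> Cj}. Q\<noteq>Q' \<longrightarrow> Q\<inter>Q'={})"
        by (rule repl_inv[OF U dC RC]) auto
      have a: "\<forall>E\<in>Cs. cnt {Ci \<union> Cj} E \<le> cnt {Ci,Cj} E"
      proof
        fix E
        have "(Ci \<union> Cj) \<inter> E \<noteq> {} \<longleftrightarrow> Ci \<inter> E \<noteq> {} \<or> Cj \<inter> E \<noteq> {}" by blast
        thus "cnt {Ci \<union> Cj} E \<le> cnt {Ci,Cj} E" unfolding ind1[of "Ci \<union> Cj" E] R2[of E]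
          by (simp split: if_splits)
      qed
      have b: "cnt {Ci \<union> Cj} D + 1 \<le> cnt {Ci,Cj} D"
        using ind1[of "Ci \<union> Cj" D] R2[of D] DD by (auto simp: Int_commute split: if_splits)
      have "clust_dist Cs C' + (if imp then 1 else 0) \<le> clust_dist Cs C"
        by (rule finish[OF finCs finC RC _ C'e a]) (use b merge(4) in auto)
      thus ?thesis using ri C'e by simp
    next
      case False
      hence C'e: "C' = (C - {Ci, Cj}) \<union> {A, B}" using merge(8) by simp
      have ri: "\<Union>((C - {Ci, Cj}) \<union> {A, B}) = X \<and> (\<forall>Q\<in>(C - {Ci, Cj}) \<union> {A, B}. \<forall>Q'\<in>(C - {Ci, Cj}) \<union> {A, B}. Q\<noteq>Q' \<longrightarrow> Q\<inter>Q'={})"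
        by (rule repl_inv[OF U dC RC]) (use sf in auto)
      have sub: "A \<subseteq> Ci \<union> Cj" "B \<subseteq> Ci \<union> Cj" using sf(1) by auto
      have "(\<forall>E\<in>Cs. cnt {A,B} E \<le> cnt {Ci,Cj} E) \<and> (imp \<longrightarrow> (\<exists>E\<in>Cs. cnt {A,B} E + 1 \<le> cnt {Ci,Cj} E))"
      proof (cases imp)
        case True
        hence nimp: "\<not> (\<exists>D'\<in>Cs. Ci \<subseteq> D' \<and> Cj \<subseteq> D')" using merge(9) by simp
        have nb: "\<not> (A \<inter> E \<noteq> {} \<and> B \<inter> E \<noteq> {})" if "E \<in> Cs" for E
          using sf(3) that nimp by blast
        have "\<forall>E\<in>Cs. cnt {A,B} E \<le> cnt {Ci,Cj} E"
        proof
          fix E assume E: "E \<in> Cs"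
          show "cnt {A,B} E \<le> cnt {Ci,Cj} E"
            using ind2le[of A B E] R2[of E] nb[OF E] sub by (auto split: if_splits)
        qed
        moreover have "cnt {A,B} D + 1 \<le> cnt {Ci,Cj} D"
          using ind2le[of A B D] R2[of D] nb[OF merge(4)] DD by (auto simp: Int_commute split: if_splits)
        ultimately show ?thesis using merge(4) by blast
      next
        case False
        then obtain D' where D': "D' \<in> Cs" "Ci \<subseteq> D'" "Cj \<subseteq> D'" using merge(9) by blast
        have "\<forall>E\<in>Cs. cnt {A,B} E \<le> cnt {Ci,Cj} E"
        proof
          fix E assume E: "E \<in> Cs"
          show "cnt {A,B} E \<le> cnt {Ci,Cj} E"
          proof (cases "E = D'")
            case True
            have "Ci \<inter> E \<noteq> {}" "Cj \<inter> E \<noteq> {}" using True D' DD by blast+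
            thus ?thesis using ind2le[of A B E] R2[of E] by (auto split: if_splits)
          next
            case False
            hence "E \<inter> D' = {}" using Csd E D'(1) by blast
            hence "A \<inter> E = {}" "B \<inter> E = {}" using sub D' by blast+
            thus ?thesis using ind2le[of A B E] by simp
          qed
        qed
        thus ?thesis using False by simp
      qed
      hence "clust_dist Cs C' + (if imp then 1 else 0) \<le> clust_dist Cs C"
        by (intro finish[OF finCs finC RC _ C'e]) auto
      thus ?thesis using ri C'e by simp
    qed
  qed
qed


lemma run_inv:
  assumes "proc_run T M Cs C0 C n" and Mp: "Mprop Cs M" and Cs: "is_clustering X Cs"
    and fin: "finite X" and C0: "is_clustering X C0"
  shows "\<Union>C = X \<and> (\<forall>Q\<in>C. \<forall>Q'\<in>C. Q\<noteq>Q' \<longrightarrow> Q\<inter>Q'={}) \<and> clust_dist Cs C + int n \<le> clust_dist Cs C0"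
  using assms(1)
proof (induction rule: proc_run.induct)
  case start
  thus ?case using C0 unfolding is_clustering_def by auto
next
  case (step C n imp C')
  have "\<Union>C' = X \<and> (\<forall>Q\<in>C'. \<forall>Q'\<in>C'. Q\<noteq>Q' \<longrightarrow> Q\<inter>Q'={})
    \<and> clust_dist Cs C' + (if imp then 1 else 0) \<le> clust_dist Cs C"
    using step_inv[OF step.hyps(2) Mp Cs fin] step.IH by simp
  moreover have "clust_dist Cs C + int n \<le> clust_dist Cs C0" using step.IH by simp
  ultimately show ?case by (cases imp) auto
qed

lemma dist_nonneg:
  assumes Cs: "is_clustering X Cs" and fin: "finite X" and U: "\<Union>C = X"
  shows "0 \<le> clust_dist Cs C"
  unfolding clust_dist_def
proof (rule sum_nonneg)
  fix D assume D: "D \<in> Cs"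
  have "D \<noteq> {}" "D \<subseteq> X" using Cs D unfolding is_clustering_def by auto
  then obtain x E where "x \<in> D" "E \<in> C" "x \<in> E" using U by blast
  hence "E \<in> {B\<in>C. B \<inter> D \<noteq> {}}" by blast
  moreover have "finite C" using U fin by (metis finite_UnionD)
  ultimately have "card {B\<in>C. B \<inter> D \<noteq> {}} \<noteq> 0" by auto
  thus "0 \<le> int (card {B\<in>C. B \<inter> D \<noteq> {}}) - 1" by simp
qed

theorem lemma23:
  fixes X :: "'a set" and S :: "'a \<Rightarrow> 'a \<Rightarrow> real"
    and Cs C0 C :: "'a set set"
    and T :: "'a set set" and M :: "('a set \<times> 'a set) set" and n :: nat
  assumes "finite X"
    and "\<And>x y. S x y = S y x"
    and "is_clustering X Cs"
    and "target_stable S Cs"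
    and "is_clustering X C0"
    and "al_tree S X T M"
    and "proc_run T M Cs C0 C n"
  shows "int n \<le> clust_dist Cs C0"
proof -
  obtain P where "al_run S X P T M" using assms(6) unfolding al_tree_def by blast
  from al_inv[OF this assms(3) assms(4) assms(1) assms(2)]
  have "Mprop Cs M" unfolding Mprop_def by (elim conjE)
  hence r: "\<Union>C = X \<and> clust_dist Cs C + int n \<le> clust_dist Cs C0"
    using run_inv[OF assms(7) _ assms(3) assms(1) assms(5)] by simp
  moreover have "0 \<le> clust_dist Cs C" using dist_nonneg[OF assms(3) assms(1)] r by blast
  ultimately show ?thesis by linarith
qed

end
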